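(* Let $f:\mathbb{R}^n\to\mathbb{R}^n$ be locally Lipschitz, partitioned into blocks $x=(x_1,\dots,x_N)$, $x_j\in\mathbb{R}^{n_j}$, with $X=\prod_j X_j$ and $X_T=\prod_jX_{j,T}$ compact, and assume the sparsity graph is acyclic with leafs $x_{i_1},\dots,x_{i_l}$. Let $I_r$ index the blocks of $\mathbf{P}(x_{i_r})$, $X_{I_r}=\prod_{j\in I_r}X_j\subset\mathbb{R}^{n_r}$, and for $T\ge0$ let $R_T$ be the ROA of $\dot x=f(x)$. Suppose $v^r\in C^1([0,T]\times\mathbb{R}^{n_r})$, $w^r\in C(X_{I_r})$, $r=1,\dots,l$, satisfy $$\sum_{r=1}^l\mathcal{L}_rv^r(t,x_{I_r})\le0 \text{ on }[0,T]\times X,\quad \sum_{r=1}^lv^r(T,x_{I_r})\ge0\text{ on }X_T,$$ $$\sum_{r=1}^lw^r(x_{I_r})\ge0\text{ on }X,\quad \sum_{r=1}^l\big(w^r(x_{I_r})-v^r(0,x_{I_r})\big)\ge l\text{ on }X.$$ Then $\{x\in X:\sum_{r=1}^lw^r(x_{I_r})\ge l\}\supset R_T$.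
   Context: Sparsity graph: nodes are the blocks; $(x_i,x_j)$ is an edge if $f_j$ depends on $x_i$; the past $\mathbf{P}(x_j)$ is $x_j$ together with all nodes with a directed path to $x_j$; a leaf is a node without successor. $x_{I_r}$ is the subvector of $x$ of blocks in $I_r$, $f_{I_r}$ the corresponding components of $f$ (depending only on $x_{I_r}$), and $\mathcal{L}_rv=\partial_tv+\nabla_{x_{I_r}}v\cdot f_{I_r}$. ROA: $R_T=\{x_0\in X:$ the solution of $\dot x=f(x)$, $x(0)=x_0$ satisfies $x(t)\in X$ on $[0,T]$ and $x(T)\in X_T\}$. *)

theory Defs
  imports "HOL-Analysis.Analysis"
begin

text \<open>State space: real^'n, coordinates partitioned into blocks via blk :: 'n => 'b.\<close>

definition locally_lipschitz :: "(real^'n \<Rightarrow> real^'n) \<Rightarrow> bool" where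
  "locally_lipschitz f \<longleftrightarrow> (\<forall>x. \<exists>e>0. \<exists>L. L-lipschitz_on (ball x e) f)"

text \<open>Masking: keep the coordinates belonging to blocks in S, zero the others.
  This is the embedding of the subvector x_S into real^'n.\<close>
definition mask :: "('n \<Rightarrow> 'b) \<Rightarrow> 'b set \<Rightarrow> real^'n \<Rightarrow> real^'n" where
  "mask blk S x = (\<chi> k. if blk k \<in> S then x $ k else 0)"

text \<open>Edge (i,j) of the sparsity graph: i \<noteq> j and f_j depends on x_i.\<close>
definition sp_edge :: "('n \<Rightarrow> 'b) \<Rightarrow> (real^'n \<Rightarrow> real^'n) \<Rightarrow> 'b \<Rightarrow> 'b \<Rightarrow> bool" where
  "sp_edge blk f i j \<longleftrightarrow> i \<noteq> j \<and>
     (\<exists>x y. (\<forall>k. blk k \<noteq> i \<longrightarrow> x $ k = y $ k) \<and> (\<exists>k. blk k = j \<and> f x $ k \<noteq> f y $ k))"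

definition sp_edges :: "('n \<Rightarrow> 'b) \<Rightarrow> (real^'n \<Rightarrow> real^'n) \<Rightarrow> ('b \<times> 'b) set" where
  "sp_edges blk f = {(i, j). sp_edge blk f i j}"

definition sp_acyclic :: "('n \<Rightarrow> 'b) \<Rightarrow> (real^'n \<Rightarrow> real^'n) \<Rightarrow> bool" where
  "sp_acyclic blk f \<longleftrightarrow> acyclic (sp_edges blk f)"

definition past :: "('n \<Rightarrow> 'b) \<Rightarrow> (real^'n \<Rightarrow> real^'n) \<Rightarrow> 'b \<Rightarrow> 'b set" where
  "past blk f j = {i. (i, j) \<in> (sp_edges blk f)\<^sup>*}"

definition leaves :: "('n \<Rightarrow> 'b) \<Rightarrow> (real^'n \<Rightarrow> real^'n) \<Rightarrow> 'b set" where
  "leaves blk f = {i. \<not> (\<exists>j. sp_edge blk f i j)}"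

definition prodset :: "('n \<Rightarrow> 'b) \<Rightarrow> ('b \<Rightarrow> (real^'n) set) \<Rightarrow> (real^'n) set" where
  "prodset blk XB = {x. \<forall>j. mask blk {j} x \<in> XB j}"

definition ROA :: "(real^'n \<Rightarrow> real^'n) \<Rightarrow> (real^'n) set \<Rightarrow> (real^'n) set \<Rightarrow> real \<Rightarrow> (real^'n) set" where
  "ROA f X XT T = {x0 \<in> X. \<exists>\<gamma>. \<gamma> 0 = x0 \<and>
      (\<forall>t\<in>{0..T}. (\<gamma> has_vector_derivative f (\<gamma> t)) (at t within {0..T})) \<and>
      (\<forall>t\<in>{0..T}. \<gamma> t \<in> X) \<and> \<gamma> T \<in> XT}"

end

theory Submission
  imports Defs
begin


lemma mask_linear: "bounded_linear (mask blk S)"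
proof -
  have "linear (mask blk S)"
    by (rule linearI) (auto simp: mask_def vec_eq_iff)
  then show ?thesis by (simp add: linear_conv_bounded_linear)
qed

theorem proposition3:
  fixes f :: "real^'n \<Rightarrow> real^'n"
    and blk :: "'n \<Rightarrow> 'b::finite"
    and XB XTB :: "'b \<Rightarrow> (real^'n) set"
    and T :: real
    and v :: "'b \<Rightarrow> real \<times> (real^'n) \<Rightarrow> real"
    and D :: "'b \<Rightarrow> real \<times> (real^'n) \<Rightarrow> real \<times> (real^'n) \<Rightarrow> real"
    and w :: "'b \<Rightarrow> real^'n \<Rightarrow> real"
  assumes lip: "locally_lipschitz f"
    and blocks: "surj blk"
    and XB_block: "\<And>j. XB j \<subseteq> range (mask blk {j})"
    and XTB_block: "\<And>j. XTB j \<subseteq> range (mask blk {j})"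
    and XB_compact: "\<And>j. compact (XB j)"
    and XTB_compact: "\<And>j. compact (XTB j)"
    and acyc: "sp_acyclic blk f"
    and T_nonneg: "T \<ge> 0"
    and v_deriv: "\<And>r z. r \<in> leaves blk f \<Longrightarrow> z \<in> {0..T} \<times> UNIV \<Longrightarrow>
         (v r has_derivative D r z) (at z within {0..T} \<times> UNIV)"
    and D_cont: "\<And>r h. r \<in> leaves blk f \<Longrightarrow>
         continuous_on ({0..T} \<times> UNIV) (\<lambda>z. D r z h)"
    and w_cont: "\<And>r. r \<in> leaves blk f \<Longrightarrow>
         continuous_on (mask blk (past blk f r) ` prodset blk XB) (w r)"
    and Lv: "\<And>t x. t \<in> {0..T} \<Longrightarrow> x \<in> prodset blk XB \<Longrightarrow>
         (\<Sum>r\<in>leaves blk f. D r (t, mask blk (past blk f r) x)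
                                  (1, mask blk (past blk f r) (f x))) \<le> 0"
    and vT: "\<And>x. x \<in> prodset blk XTB \<Longrightarrow>
         (\<Sum>r\<in>leaves blk f. v r (T, mask blk (past blk f r) x)) \<ge> 0"
    and w_nonneg: "\<And>x. x \<in> prodset blk XB \<Longrightarrow>
         (\<Sum>r\<in>leaves blk f. w r (mask blk (past blk f r) x)) \<ge> 0"
    and wv: "\<And>x. x \<in> prodset blk XB \<Longrightarrow>
         (\<Sum>r\<in>leaves blk f. w r (mask blk (past blk f r) x) - v r (0, mask blk (past blk f r) x))
           \<ge> real (card (leaves blk f))"
  shows "ROA f (prodset blk XB) (prodset blk XTB) T \<subseteq>
         {x \<in> prodset blk XB. (\<Sum>r\<in>leaves blk f. w r (mask blk (past blk f r) x)) \<ge> real (card (leaves blk f))}"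
proof
  fix x0 assume x0: "x0 \<in> ROA f (prodset blk XB) (prodset blk XTB) T"
  let ?L = "leaves blk f"
  let ?m = "\<lambda>r. mask blk (past blk f r)"
  obtain \<gamma> where g0: "\<gamma> 0 = x0" and
    gd: "\<And>t. t\<in>{0..T} \<Longrightarrow> (\<gamma> has_vector_derivative f (\<gamma> t)) (at t within {0..T})" and
    gX: "\<And>t. t\<in>{0..T} \<Longrightarrow> \<gamma> t \<in> prodset blk XB" and
    gT: "\<gamma> T \<in> prodset blk XTB" and x0X: "x0 \<in> prodset blk XB"
    using x0 unfolding ROA_def by blast
  define V where "V t = (\<Sum>r\<in>?L. v r (t, ?m r (\<gamma> t)))" for t
  define V' where "V' t = (\<Sum>r\<in>?L. D r (t, ?m r (\<gamma> t)) (1, ?m r (f (\<gamma> t))))" for t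
  have Vd: "(V has_real_derivative V' t) (at t within {0..T})" if t: "t \<in> {0..T}" for t
  proof -
    have each: "((\<lambda>s. v r (s, ?m r (\<gamma> s))) has_derivative
        (\<lambda>h. D r (t, ?m r (\<gamma> t)) (h, h *\<^sub>R ?m r (f (\<gamma> t))))) (at t within {0..T})"
      if r: "r \<in> ?L" for r
    proof -
      have g1: "(\<gamma> has_derivative (\<lambda>h. h *\<^sub>R f (\<gamma> t))) (at t within {0..T})"
        using gd[OF t] by (simp add: has_vector_derivative_def)
      have g2: "((\<lambda>s. ?m r (\<gamma> s)) has_derivative (\<lambda>h. ?m r (h *\<^sub>R f (\<gamma> t)))) (at t within {0..T})"
        using bounded_linear.has_derivative[OF mask_linear g1] .
      have ms: "?m r (h *\<^sub>R y) = h *\<^sub>R ?m r y" for h y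
        using linear_cmul[OF bounded_linear.linear[OF mask_linear]] by blast
      have g3: "((\<lambda>s. (s, ?m r (\<gamma> s))) has_derivative (\<lambda>h. (h, h *\<^sub>R ?m r (f (\<gamma> t))))) (at t within {0..T})"
        using has_derivative_Pair[OF has_derivative_ident g2] by (simp add: ms)
      show ?thesis
        by (rule has_derivative_in_compose2[where t="{0..T} \<times> UNIV", OF v_deriv[OF r] _ t g3]) auto
    qed
    have sd: "(V has_derivative (\<lambda>h. \<Sum>r\<in>?L. D r (t, ?m r (\<gamma> t)) (h, h *\<^sub>R ?m r (f (\<gamma> t))))) (at t within {0..T})"
      unfolding V_def by (rule has_derivative_sum) (rule each)
    have lin: "D r (t, ?m r (\<gamma> t)) (h, h *\<^sub>R y) = h * D r (t, ?m r (\<gamma> t)) (1, y)"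
      if r: "r \<in> ?L" for r h y
    proof -
      have "linear (D r (t, ?m r (\<gamma> t)))"
        using v_deriv[OF r, of "(t, ?m r (\<gamma> t))"] t has_derivative_linear by auto
      then have "D r (t, ?m r (\<gamma> t)) (h *\<^sub>R (1, y)) = h *\<^sub>R D r (t, ?m r (\<gamma> t)) (1, y)"
        by (rule linear_cmul)
      then show ?thesis by simp
    qed
    have "(\<lambda>h. \<Sum>r\<in>?L. D r (t, ?m r (\<gamma> t)) (h, h *\<^sub>R ?m r (f (\<gamma> t)))) = (\<lambda>h. h * V' t)"
      by (auto simp: V'_def lin sum_distrib_left intro!: sum.cong)
    with sd have "(V has_derivative (\<lambda>h. h * V' t)) (at t within {0..T})" by simp
    moreover have "(\<lambda>h. h * V' t) = (*) (V' t)" by (auto simp: mult.commute)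
    ultimately show ?thesis
      by (simp add: has_field_derivative_def)
  qed
  have "V T \<le> V 0"
  proof (rule DERIV_nonpos_imp_decreasing_open[OF T_nonneg])
    fix t assume "0 < t" "t < T"
    then have "(V has_real_derivative V' t) (at t)"
      using Vd[of t] at_within_Icc_at[of 0 t T] by auto
    moreover have "V' t \<le> 0" unfolding V'_def
      using Lv[of t "\<gamma> t"] gX[of t] \<open>0 < t\<close> \<open>t < T\<close> by auto
    ultimately show "\<exists>y. (V has_real_derivative y) (at t) \<and> y \<le> 0" by blast
  next
    show "continuous_on {0..T} V"
      using Vd by (meson DERIV_continuous continuous_on_eq_continuous_within)
  qed
  moreover have "V T \<ge> 0" using vT[OF gT] by (simp add: V_def)
  moreover have "(\<Sum>r\<in>?L. w r (?m r x0) - v r (0, ?m r x0)) \<ge> real (card ?L)"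
    using wv[OF x0X] .
  ultimately have "(\<Sum>r\<in>?L. w r (?m r x0)) \<ge> real (card ?L)"
    by (simp add: V_def g0 sum_subtractf)
  with x0X show "x0 \<in> {x \<in> prodset blk XB. (\<Sum>r\<in>?L. w r (?m r x)) \<ge> real (card ?L)}" by simp
qed

end
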